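(* Consider the closed-loop scalar system $\dot X(t)=aX(t)+bU(t)$ with $a>0$, $b\ne0$, and the open-loop system $\dot X(t)=aX(t)$, both with random initial state $X(0)$, $h(X(0))<\infty$, $|X(0)|<L$ ($L$ known to sensor and controller), with the sensor communicating over the timing channel described in the context. If there exists an estimator such that in open loop $|X(t)-\hat X(t)|\to0$ in probability as $t\to\infty$, then there exists a controller such that in closed loop $|X(t)|\to0$ in probability as $t\to\infty$.
   Context: Timing channel: symbols from a one-element alphabet; initialized with a symbol received at time $0$; after the acknowledgment of the $i$-th reception the sender waits $W_{i+1}\ge0$ and transmits the next symbol, received after an i.i.d. random delay $S_{i+1}\ge0$; $D_i=W_i+S_i$. The sensor knows $X(0)$, $L$ and the dynamics and encodes into the waiting times (random i.i.d. codebook independent of delays; acknowledgments used only to avoid queuing). The controller (resp. estimator) at time $t$ computes $U(t)$ (resp. $\hat X(t)$) from the inter-reception times of all symbols received by time $t$, $L$, the dynamics (and, for the controller, its own past inputs). Control inputs are applied with infinite precision and zero delay. *)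

theory Defs
  imports "HOL-Probability.Probability"
begin

text \<open>Besides the initial symbol (received at time 0), the
  sender transmits symbols j = 0, 1, 2, ... (the paper's symbols 1, 2, 3, ...).
  Before symbol j the sender waits W j (after the acknowledgment of the previous
  reception); symbol j then experiences the random delay S j.\<close>

definition inter_rec :: "(nat \<Rightarrow> 'a \<Rightarrow> real) \<Rightarrow> (nat \<Rightarrow> 'a \<Rightarrow> real) \<Rightarrow> nat \<Rightarrow> 'a \<Rightarrow> real" where
  "inter_rec Wt S j \<omega> = Wt j \<omega> + S j \<omega>"

definition rec_time :: "(nat \<Rightarrow> 'a \<Rightarrow> real) \<Rightarrow> nat \<Rightarrow> 'a \<Rightarrow> real" where
  "rec_time D j \<omega> = (\<Sum>k\<le>j. D k \<omega>)"

definition obs :: "(nat \<Rightarrow> 'a \<Rightarrow> real) \<Rightarrow> real \<Rightarrow> 'a \<Rightarrow> nat \<Rightarrow> real option" where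
  "obs D t \<omega> = (\<lambda>j. if rec_time D j \<omega> \<le> t then Some (D j \<omega>) else None)"

text \<open>Index set of the primitive random quantities: initial state, the random
  codebook (shared randomness of sensor and receiver), and the delays.\<close>

datatype src = Init | Code | Delay nat

fun rvs :: "('a \<Rightarrow> real) \<Rightarrow> ('a \<Rightarrow> real) \<Rightarrow> (nat \<Rightarrow> 'a \<Rightarrow> real) \<Rightarrow> src \<Rightarrow> 'a \<Rightarrow> real" where
  "rvs X0 K S Init = X0"
| "rvs X0 K S Code = K"
| "rvs X0 K S (Delay i) = S i"

text \<open>An admissible encoder: a random codebook K independent of the initial
  state and of the delays, and waiting times W i = enc i (X(0)) (codebook) \<ge> 0,
  i.e. depending only on X(0) and the codebook (not on the delays).\<close>

definition admissible_encoder ::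
  "'a measure \<Rightarrow> ('a \<Rightarrow> real) \<Rightarrow> (nat \<Rightarrow> 'a \<Rightarrow> real) \<Rightarrow> ('a \<Rightarrow> real)
     \<Rightarrow> (nat \<Rightarrow> real \<Rightarrow> real \<Rightarrow> real) \<Rightarrow> bool" where
  "admissible_encoder M X0 S K enc \<longleftrightarrow>
     prob_space.indep_vars M (\<lambda>_. borel) (rvs X0 K S) UNIV \<and>
     (\<forall>i x k. 0 \<le> enc i x k)"

definition delays_of ::
  "('a \<Rightarrow> real) \<Rightarrow> (nat \<Rightarrow> 'a \<Rightarrow> real) \<Rightarrow> ('a \<Rightarrow> real)
     \<Rightarrow> (nat \<Rightarrow> real \<Rightarrow> real \<Rightarrow> real) \<Rightarrow> nat \<Rightarrow> 'a \<Rightarrow> real" where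
  "delays_of X0 S K enc = inter_rec (\<lambda>i \<omega>. enc i (X0 \<omega>) (K \<omega>)) S"

definition tendsto_zero_in_prob :: "'a measure \<Rightarrow> (real \<Rightarrow> 'a \<Rightarrow> real) \<Rightarrow> bool" where
  "tendsto_zero_in_prob M Z \<longleftrightarrow>
     (\<forall>t. Z t \<in> borel_measurable M) \<and>
     (\<forall>\<epsilon>>0. ((\<lambda>t. measure M {\<omega> \<in> space M. \<bar>Z t \<omega>\<bar> > \<epsilon>}) \<longlongrightarrow> 0) at_top)"

text \<open>Closed-loop state (variation of constants) of dX = aX + bU, X(0) = X0.\<close>

definition cl_state :: "real \<Rightarrow> real \<Rightarrow> ('a \<Rightarrow> real) \<Rightarrow> (real \<Rightarrow> 'a \<Rightarrow> real) \<Rightarrow> real \<Rightarrow> 'a \<Rightarrow> real" where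
  "cl_state a b X0 U t \<omega> =
     exp (a * t) * X0 \<omega> + integral {0..t} (\<lambda>s. exp (a * (t - s)) * b * U s \<omega>)"

end

theory Submission imports Defs begin

lemma floor_piece:
  assumes "real n \<le> s" "s < real n + 1"
  shows "nat \<lfloor>s\<rfloor> = n"
  using assms by (metis floor_eq2 nat_int of_int_of_nat_eq)

lemma pw_integrable_aux:
  fixes h :: "nat \<Rightarrow> real \<Rightarrow> real"
  assumes "\<And>n. continuous_on UNIV (h n)"
  shows "\<forall>t\<in>{real n..real n + 1}. (\<lambda>s. h (nat \<lfloor>s\<rfloor>) s) integrable_on {0..t}"
proof (induction n)
  case 0
  show ?case
  proof
    fix t :: real assume t: "t \<in> {real 0..real 0 + 1}"
    have hi: "h 0 integrable_on {0..t}"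
      by (rule integrable_continuous_interval) (meson assms continuous_on_subset subset_UNIV)
    show "(\<lambda>s. h (nat \<lfloor>s\<rfloor>) s) integrable_on {0..t}"
      by (rule integrable_spike_finite[of "{t}", OF _ _ hi]) (use t floor_piece[of 0] in auto)
  qed
next
  case (Suc n)
  show ?case
  proof
    fix t :: real assume t: "t \<in> {real (Suc n)..real (Suc n) + 1}"
    have a: "(\<lambda>s. h (nat \<lfloor>s\<rfloor>) s) integrable_on {0..real (Suc n)}"
      using Suc by auto
    have hi: "h (Suc n) integrable_on {real (Suc n)..t}"
      by (rule integrable_continuous_interval) (meson assms continuous_on_subset subset_UNIV)
    have b: "(\<lambda>s. h (nat \<lfloor>s\<rfloor>) s) integrable_on {real (Suc n)..t}"
      by (rule integrable_spike_finite[of "{t}", OF _ _ hi]) (use t floor_piece[of "Suc n"] in auto)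
    show "(\<lambda>s. h (nat \<lfloor>s\<rfloor>) s) integrable_on {0..t}"
      by (rule Henstock_Kurzweil_Integration.integrable_combine[OF _ _ a b]) (use t in auto)
  qed
qed

lemma pw_integrable:
  fixes h :: "nat \<Rightarrow> real \<Rightarrow> real"
  assumes "\<And>n. continuous_on UNIV (h n)" "0 \<le> t"
  shows "(\<lambda>s. h (nat \<lfloor>s\<rfloor>) s) integrable_on {0..t}"
proof -
  have "real (nat \<lfloor>t\<rfloor>) \<le> t" "t \<le> real (nat \<lfloor>t\<rfloor>) + 1" using assms(2) by linarith+
  then show ?thesis using pw_integrable_aux[of h "nat \<lfloor>t\<rfloor>"] assms(1) by auto
qed

lemma pw_has_integral_aux:
  fixes c :: "nat \<Rightarrow> real"
  shows "\<forall>t\<in>{real n..real n + 1}. ((\<lambda>s. c (Suc (nat \<lfloor>s\<rfloor>)) - c (nat \<lfloor>s\<rfloor>)) has_integral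
            (c n - c 0 + (t - real n) * (c (Suc n) - c n))) {0..t}"
proof (induction n)
  case 0
  show ?case
  proof
    fix t :: real assume t: "t \<in> {real 0..real 0 + 1}"
    have hi: "((\<lambda>s. c (Suc 0) - c 0) has_integral (c 0 - c 0 + (t - real 0) * (c (Suc 0) - c 0))) {0..t}"
      using has_integral_const_real[of "c (Suc 0) - c 0" 0 t] t by auto
    show "((\<lambda>s. c (Suc (nat \<lfloor>s\<rfloor>)) - c (nat \<lfloor>s\<rfloor>)) has_integral (c 0 - c 0 + (t - real 0) * (c (Suc 0) - c 0))) {0..t}"
      by (rule has_integral_spike_finite[of "{t}", OF _ _ hi]) (use t floor_piece[of 0] in auto)
  qed
next
  case (Suc n)
  show ?case
  proof
    fix t :: real assume t: "t \<in> {real (Suc n)..real (Suc n) + 1}"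
    have a: "((\<lambda>s. c (Suc (nat \<lfloor>s\<rfloor>)) - c (nat \<lfloor>s\<rfloor>)) has_integral (c (Suc n) - c 0)) {0..real (Suc n)}"
      using Suc[rule_format, of "real (Suc n)"] by auto
    have hi: "((\<lambda>s. c (Suc (Suc n)) - c (Suc n)) has_integral ((t - real (Suc n)) * (c (Suc (Suc n)) - c (Suc n)))) {real (Suc n)..t}"
      using has_integral_const_real[of "c (Suc (Suc n)) - c (Suc n)" "real (Suc n)" t] t by auto
    have b: "((\<lambda>s. c (Suc (nat \<lfloor>s\<rfloor>)) - c (nat \<lfloor>s\<rfloor>)) has_integral ((t - real (Suc n)) * (c (Suc (Suc n)) - c (Suc n)))) {real (Suc n)..t}"
      by (rule has_integral_spike_finite[of "{t}", OF _ _ hi]) (use t floor_piece[of "Suc n"] in auto)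
    show "((\<lambda>s. c (Suc (nat \<lfloor>s\<rfloor>)) - c (nat \<lfloor>s\<rfloor>)) has_integral (c (Suc n) - c 0 + (t - real (Suc n)) * (c (Suc (Suc n)) - c (Suc n)))) {0..t}"
      using has_integral_combine[OF _ _ a b] t by auto
  qed
qed

lemma pw_has_integral:
  fixes c :: "nat \<Rightarrow> real"
  assumes "0 \<le> t"
  shows "((\<lambda>s. c (Suc (nat \<lfloor>s\<rfloor>)) - c (nat \<lfloor>s\<rfloor>)) has_integral
            (c (nat \<lfloor>t\<rfloor>) - c 0 + (t - real (nat \<lfloor>t\<rfloor>)) * (c (Suc (nat \<lfloor>t\<rfloor>)) - c (nat \<lfloor>t\<rfloor>)))) {0..t}"
proof -
  have "real (nat \<lfloor>t\<rfloor>) \<le> t" "t \<le> real (nat \<lfloor>t\<rfloor>) + 1" using assms by linarith+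
  then show ?thesis using pw_has_integral_aux[of "nat \<lfloor>t\<rfloor>" c] by auto
qed


definition trunc_obs :: "real \<Rightarrow> (nat \<Rightarrow> real option) \<Rightarrow> nat \<Rightarrow> real option" where
  "trunc_obs m ob = (\<lambda>j. if (\<forall>k\<le>j. ob k \<noteq> None) \<and> (\<Sum>k\<le>j. the (ob k)) \<le> m then ob j else None)"

lemma rec_time_mono:
  assumes "\<forall>j. 0 \<le> D j \<omega>" "k \<le> j"
  shows "rec_time D k \<omega> \<le> rec_time D j \<omega>"
  unfolding rec_time_def using assms by (intro sum_mono2) auto

lemma trunc_obs_eq:
  assumes nn: "\<forall>j. 0 \<le> D j \<omega>" and mt: "m \<le> t"
  shows "trunc_obs m (obs D t \<omega>) = obs D m \<omega>"
proof
  fix j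
  show "trunc_obs m (obs D t \<omega>) j = obs D m \<omega> j"
  proof (cases "rec_time D j \<omega> \<le> m")
    case True
    have all: "\<forall>k\<le>j. obs D t \<omega> k = Some (D k \<omega>)"
      using rec_time_mono[of D \<omega>, OF nn] True mt unfolding obs_def
      by (metis order_trans)
    then have "(\<Sum>k\<le>j. the (obs D t \<omega> k)) = rec_time D j \<omega>"
      unfolding rec_time_def by (intro sum.cong) auto
    then show ?thesis using True all unfolding trunc_obs_def by (auto simp: obs_def)
  next
    case False
    have "\<not> ((\<forall>k\<le>j. obs D t \<omega> k \<noteq> None) \<and> (\<Sum>k\<le>j. the (obs D t \<omega> k)) \<le> m)"
    proof
      assume h: "(\<forall>k\<le>j. obs D t \<omega> k \<noteq> None) \<and> (\<Sum>k\<le>j. the (obs D t \<omega> k)) \<le> m"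
      then have "\<forall>k\<le>j. obs D t \<omega> k = Some (D k \<omega>)" unfolding obs_def by (auto split: if_splits)
      then have "(\<Sum>k\<le>j. the (obs D t \<omega> k)) = rec_time D j \<omega>"
        unfolding rec_time_def by (intro sum.cong) auto
      then show False using h False by auto
    qed
    then show ?thesis using False unfolding trunc_obs_def obs_def by auto
  qed
qed

definition vv :: "real \<Rightarrow> (real \<Rightarrow> 'k \<Rightarrow> (nat \<Rightarrow> real option) \<Rightarrow> real) \<Rightarrow> 'k \<Rightarrow> (nat \<Rightarrow> real option) \<Rightarrow> nat \<Rightarrow> real" where
  "vv a est k ob n = exp (- a * real n) * est (real n) k (trunc_obs (real n) ob)"

definition ccf :: "real \<Rightarrow> (real \<Rightarrow> 'k \<Rightarrow> (nat \<Rightarrow> real option) \<Rightarrow> real) \<Rightarrow> 'k \<Rightarrow> (nat \<Rightarrow> real option) \<Rightarrow> nat \<Rightarrow> real" where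
  "ccf a est k ob n = (if n = 0 then 0 else vv a est k ob (n - 1))"

definition ctrl0 :: "real \<Rightarrow> real \<Rightarrow> (real \<Rightarrow> 'k \<Rightarrow> (nat \<Rightarrow> real option) \<Rightarrow> real) \<Rightarrow> real \<Rightarrow> 'k \<Rightarrow> (nat \<Rightarrow> real option) \<Rightarrow> real" where
  "ctrl0 a b est t k ob = - exp (a * t) * (ccf a est k ob (Suc (nat \<lfloor>t\<rfloor>)) - ccf a est k ob (nat \<lfloor>t\<rfloor>)) / b"


theorem lemma3:
  fixes M :: "'a measure" and X0 :: "'a \<Rightarrow> real" and S :: "nat \<Rightarrow> 'a \<Rightarrow> real"
    and a b L :: real and fX :: "real \<Rightarrow> real"
  assumes "prob_space M"
    and "a > 0" and "b \<noteq> 0"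
    and "information_space.finite_entropy M 2 lborel X0 fX"
    and "\<forall>\<omega>\<in>space M. \<bar>X0 \<omega>\<bar> < L"
    and "prob_space.indep_vars M (\<lambda>_. borel) (\<lambda>j. case j of None \<Rightarrow> X0 | Some i \<Rightarrow> S i) UNIV"
    and "\<forall>i. distr M borel (S i) = distr M borel (S 0)"
    and "\<forall>i. \<forall>\<omega>\<in>space M. 0 \<le> S i \<omega>"
    and "\<exists>K enc est. admissible_encoder M X0 S K enc \<and>
           tendsto_zero_in_prob M
             (\<lambda>t \<omega>. exp (a * t) * X0 \<omega> - est t (K \<omega>) (obs (delays_of X0 S K enc) t \<omega>))"
  shows "\<exists>K enc ctrl. admissible_encoder M X0 S K enc \<and>
           (let U = (\<lambda>t \<omega>. ctrl t (K \<omega>) (obs (delays_of X0 S K enc) t \<omega>)) in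
             (\<forall>\<omega>\<in>space M. \<forall>t\<ge>0. (\<lambda>s. U s \<omega>) absolutely_integrable_on {0..t}) \<and>
             tendsto_zero_in_prob M (cl_state a b X0 U))"
proof -
  interpret P: prob_space M by fact
  obtain K enc est where adm: "admissible_encoder M X0 S K enc" and
    conv: "tendsto_zero_in_prob M
             (\<lambda>t \<omega>. exp (a * t) * X0 \<omega> - est t (K \<omega>) (obs (delays_of X0 S K enc) t \<omega>))"
    using assms(9) by blast
  define D where "D = delays_of X0 S K enc"
  define Y where "Y = (\<lambda>m \<omega>. est m (K \<omega>) (obs D m \<omega>))"
  define E where "E = (\<lambda>m \<omega>. exp (a * m) * X0 \<omega> - Y m \<omega>)"
  define cc where "cc = (\<lambda>n \<omega>. if n = 0 then 0 else exp (- a * real (n - 1)) * Y (real (n - 1)) \<omega>)"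
  define U where "U = (\<lambda>t \<omega>. ctrl0 a b est t (K \<omega>) (obs D t \<omega>))"
  define cl where "cl = (\<lambda>t \<omega>. cc (nat \<lfloor>t\<rfloor>) \<omega> + (t - real (nat \<lfloor>t\<rfloor>)) * (cc (Suc (nat \<lfloor>t\<rfloor>)) \<omega> - cc (nat \<lfloor>t\<rfloor>) \<omega>))"
  have X0m[measurable]: "X0 \<in> borel_measurable M"
  proof -
    have "P.indep_vars (\<lambda>_. borel) (rvs X0 K S) UNIV" using adm unfolding admissible_encoder_def by blast
    then have "rvs X0 K S Init \<in> borel_measurable M" unfolding P.indep_vars_def by blast
    then show ?thesis by simp
  qed
  have conv': "\<forall>m. E m \<in> borel_measurable M"
    "\<And>e. e > 0 \<Longrightarrow> ((\<lambda>t. measure M {\<omega> \<in> space M. \<bar>E t \<omega>\<bar> > e}) \<longlongrightarrow> 0) at_top"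
    using conv unfolding tendsto_zero_in_prob_def E_def Y_def D_def by auto
  have Em[measurable]: "\<And>m. E m \<in> borel_measurable M" using conv' by auto
  have Ym[measurable]: "\<And>m. Y m \<in> borel_measurable M"
  proof -
    fix m
    have "Y m = (\<lambda>\<omega>. exp (a * m) * X0 \<omega> - E m \<omega>)" unfolding E_def by auto
    then show "Y m \<in> borel_measurable M" by simp
  qed
  have ccm[measurable]: "\<And>n. cc n \<in> borel_measurable M"
    unfolding cc_def by (case_tac "n = 0") auto
  have clm[measurable]: "\<And>t. cl t \<in> borel_measurable M"
    unfolding cl_def by measurable
  have Dnn: "\<And>\<omega>. \<omega> \<in> space M \<Longrightarrow> \<forall>j. 0 \<le> D j \<omega>"
    using adm assms(8) unfolding D_def delays_of_def inter_rec_def admissible_encoder_def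
    by (metis add_nonneg_nonneg)
  have Ueq: "U s \<omega> = - exp (a * s) * (cc (Suc (nat \<lfloor>s\<rfloor>)) \<omega> - cc (nat \<lfloor>s\<rfloor>) \<omega>) / b"
    if \<omega>: "\<omega> \<in> space M" and s: "0 \<le> s" for s \<omega>
  proof -
    have ce: "ccf a est (K \<omega>) (obs D s \<omega>) n = cc n \<omega>" if "n \<le> Suc (nat \<lfloor>s\<rfloor>)" for n
    proof (cases "n = 0")
      case True then show ?thesis unfolding ccf_def cc_def by simp
    next
      case False
      have "real (n - 1) \<le> s" using that s by linarith
      then have "trunc_obs (real (n - 1)) (obs D s \<omega>) = obs D (real (n - 1)) \<omega>"
        using trunc_obs_eq[of D \<omega>, OF Dnn[OF \<omega>]] by blast
      then show ?thesis using False unfolding ccf_def cc_def vv_def Y_def by simp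
    qed
    show ?thesis unfolding U_def ctrl0_def using ce[of "Suc (nat \<lfloor>s\<rfloor>)"] ce[of "nat \<lfloor>s\<rfloor>"] by simp
  qed
  have cls: "cl_state a b X0 U t \<omega> = exp (a * t) * (X0 \<omega> - cl t \<omega>)"
    if \<omega>: "\<omega> \<in> space M" and t: "0 \<le> t" for t \<omega>
  proof -
    have "((\<lambda>s. cc (Suc (nat \<lfloor>s\<rfloor>)) \<omega> - cc (nat \<lfloor>s\<rfloor>) \<omega>) has_integral cl t \<omega>) {0..t}"
      using pw_has_integral[OF t, of "\<lambda>n. cc n \<omega>"] unfolding cl_def by (simp add: cc_def)
    then have hi: "((\<lambda>s. - exp (a * t) * (cc (Suc (nat \<lfloor>s\<rfloor>)) \<omega> - cc (nat \<lfloor>s\<rfloor>) \<omega>)) has_integral (- exp (a * t) * cl t \<omega>)) {0..t}"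
      by (rule has_integral_mult_right)
    have "((\<lambda>s. exp (a * (t - s)) * b * U s \<omega>) has_integral (- exp (a * t) * cl t \<omega>)) {0..t}"
    proof (rule has_integral_spike_finite[of "{}", OF _ _ hi])
      fix s assume "s \<in> {0..t} - {}"
      then have "0 \<le> s" by auto
      then show "exp (a * (t - s)) * b * U s \<omega> = - exp (a * t) * (cc (Suc (nat \<lfloor>s\<rfloor>)) \<omega> - cc (nat \<lfloor>s\<rfloor>) \<omega>)"
        unfolding Ueq[OF \<omega> \<open>0 \<le> s\<close>] using assms(3)
        by (simp add: exp_diff field_simps)
    qed simp
    then have "integral {0..t} (\<lambda>s. exp (a * (t - s)) * b * U s \<omega>) = - exp (a * t) * cl t \<omega>"
      by (rule integral_unique)
    then show ?thesis unfolding cl_state_def by (simp add: algebra_simps)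
  qed
  have clsneg: "cl_state a b X0 U t \<omega> = exp (a * t) * X0 \<omega>" if "t < 0" for t \<omega>
    using that unfolding cl_state_def by simp
  have absint: "(\<lambda>s. U s \<omega>) absolutely_integrable_on {0..t}"
    if \<omega>: "\<omega> \<in> space M" and t: "0 \<le> t" for t \<omega>
  proof -
    define h where "h = (\<lambda>n s. - exp (a * s) * (cc (Suc n) \<omega> - cc n \<omega>) / b)"
    have hc: "continuous_on UNIV (h n)" for n unfolding h_def using assms(3) by (intro continuous_intros) auto
    have hc': "continuous_on UNIV (\<lambda>s. \<bar>h n s\<bar>)" for n unfolding h_def using assms(3) by (intro continuous_intros) auto
    have i1: "(\<lambda>s. h (nat \<lfloor>s\<rfloor>) s) integrable_on {0..t}" by (rule pw_integrable[OF hc t])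
    have i2: "(\<lambda>s. \<bar>h (nat \<lfloor>s\<rfloor>) s\<bar>) integrable_on {0..t}"
      using pw_integrable[of "\<lambda>n s. \<bar>h n s\<bar>", OF hc' t] by simp
    have eq: "U s \<omega> = h (nat \<lfloor>s\<rfloor>) s" if "s \<in> {0..t}" for s
      using Ueq[OF \<omega>] that unfolding h_def by auto
    have j1: "(\<lambda>s. U s \<omega>) integrable_on {0..t}"
      by (rule integrable_spike_finite[of "{}", OF _ _ i1]) (use eq in auto)
    have j2: "(\<lambda>s. \<bar>U s \<omega>\<bar>) integrable_on {0..t}"
      by (rule integrable_spike_finite[of "{}", OF _ _ i2]) (use eq in auto)
    show ?thesis
      by (rule absolutely_integrable_integrable_bound[OF _ j1 j2]) simp
  qed
  have meas: "cl_state a b X0 U t \<in> borel_measurable M" for t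
  proof (cases "t < 0")
    case True
    then show ?thesis by (subst measurable_cong[OF clsneg]) auto
  next
    case False
    then show ?thesis by (subst measurable_cong[OF cls]) auto
  qed
  have lim: "((\<lambda>t. measure M {\<omega> \<in> space M. \<bar>cl_state a b X0 U t \<omega>\<bar> > e}) \<longlongrightarrow> 0) at_top"
    if e: "e > 0" for e
  proof -
    define C where "C = exp (2 * a)"
    define e' where "e' = e / (2 * C)"
    have Cpos: "C > 0" unfolding C_def by simp
    have e'pos: "e' > 0" unfolding e'_def using Cpos e by simp
    define f where "f = (\<lambda>r. measure M {\<omega> \<in> space M. \<bar>E r \<omega>\<bar> > e'})"
    have f0: "(f \<longlongrightarrow> 0) at_top" using conv'(2)[OF e'pos] unfolding f_def by simp
    have lin: "filterlim (\<lambda>x::real. -2 + x) at_top at_top"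
      by (rule filterlim_tendsto_add_at_top[OF tendsto_const filterlim_ident])
    have h1: "filterlim (\<lambda>t::real. real (nat \<lfloor>t\<rfloor>) - 1) at_top at_top"
    proof -
      have ev: "\<forall>\<^sub>F t in at_top. -2 + t \<le> real (nat \<lfloor>t\<rfloor>) - 1"
        using eventually_ge_at_top[of "0::real"] by eventually_elim linarith
      show ?thesis using filterlim_at_top_mono[OF lin ev] .
    qed
    have h2: "filterlim (\<lambda>t::real. real (nat \<lfloor>t\<rfloor>)) at_top at_top"
    proof -
      have ev: "\<forall>\<^sub>F t in at_top. -2 + t \<le> real (nat \<lfloor>t\<rfloor>)"
        using eventually_ge_at_top[of "0::real"] by eventually_elim linarith
      show ?thesis using filterlim_at_top_mono[OF lin ev] .
    qed
    have hl: "((\<lambda>t::real. f (real (nat \<lfloor>t\<rfloor>) - 1) + f (real (nat \<lfloor>t\<rfloor>))) \<longlongrightarrow> 0) at_top"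
      using tendsto_add[OF filterlim_compose[OF f0 h1] filterlim_compose[OF f0 h2]] by simp
    have bound: "\<bar>cl_state a b X0 U t \<omega>\<bar> \<le> C * \<bar>E (real (nat \<lfloor>t\<rfloor>) - 1) \<omega>\<bar> + C * \<bar>E (real (nat \<lfloor>t\<rfloor>)) \<omega>\<bar>"
      if \<omega>: "\<omega> \<in> space M" and t1: "1 \<le> t" for t \<omega>
    proof -
      define n where "n = nat \<lfloor>t\<rfloor>"
      define th where "th = t - real n"
      have n1: "n \<ge> 1" "real n \<le> t" "t < real n + 1" unfolding n_def using t1 by linarith+
      have th: "0 \<le> th" "th < 1" unfolding th_def using n1 by auto
      define E1 where "E1 = E (real n - 1) \<omega>"
      define E2 where "E2 = E (real n) \<omega>"
      have c1: "cc n \<omega> = X0 \<omega> - exp (- a * (real n - 1)) * E1"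
        using n1 unfolding cc_def E1_def E_def
        by (simp add: of_nat_diff algebra_simps exp_add[symmetric])
      have c2: "cc (Suc n) \<omega> = X0 \<omega> - exp (- a * real n) * E2"
        unfolding cc_def E2_def E_def
        by (simp add: algebra_simps exp_add[symmetric])
      have "X0 \<omega> - cl t \<omega> = (1 - th) * (exp (- a * (real n - 1)) * E1) + th * (exp (- a * real n) * E2)"
        unfolding cl_def n_def[symmetric] th_def[symmetric] c1 c2 by (simp add: algebra_simps)
      note xe = this
      have p1: "exp (a * t) * exp (- a * (real n - 1)) = exp (a * (t - (real n - 1)))"
        by (simp add: exp_add[symmetric] algebra_simps)
      have p2: "exp (a * t) * exp (- a * real n) = exp (a * (t - real n))"
        by (simp add: exp_add[symmetric] algebra_simps)
      have "cl_state a b X0 U t \<omega> = exp (a * t) * (X0 \<omega> - cl t \<omega>)"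
        using cls[OF \<omega>] t1 by simp
      also have "\<dots> = (1 - th) * ((exp (a * t) * exp (- a * (real n - 1))) * E1) + th * ((exp (a * t) * exp (- a * real n)) * E2)"
        unfolding xe by (simp only: distrib_left mult.assoc mult.left_commute)
      finally have eq: "cl_state a b X0 U t \<omega> = (1 - th) * (exp (a * (t - (real n - 1))) * E1) + th * (exp (a * (t - real n)) * E2)"
        unfolding p1 p2 .
      have A: "exp (a * (t - (real n - 1))) \<le> C" unfolding C_def using n1 assms(2) by simp
      have B: "exp (a * (t - real n)) \<le> C" unfolding C_def using n1 assms(2) by simp
      have "\<bar>cl_state a b X0 U t \<omega>\<bar> \<le> (1 - th) * (exp (a * (t - (real n - 1))) * \<bar>E1\<bar>) + th * (exp (a * (t - real n)) * \<bar>E2\<bar>)"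
        unfolding eq using th by (simp add: abs_mult abs_triangle_ineq order_trans[OF abs_triangle_ineq])
      also have "\<dots> \<le> 1 * (C * \<bar>E1\<bar>) + 1 * (C * \<bar>E2\<bar>)"
        using th A B Cpos by (intro add_mono mult_mono) auto
      finally show ?thesis unfolding E1_def E2_def n_def by simp
    qed
    have ev2: "\<forall>\<^sub>F t in at_top. measure M {\<omega> \<in> space M. \<bar>cl_state a b X0 U t \<omega>\<bar> > e}
        \<le> f (real (nat \<lfloor>t\<rfloor>) - 1) + f (real (nat \<lfloor>t\<rfloor>))"
      using eventually_ge_at_top[of "1::real"]
    proof (rule eventually_mono)
      fix t :: real assume t1: "1 \<le> t"
      let ?A = "{\<omega> \<in> space M. \<bar>E (real (nat \<lfloor>t\<rfloor>) - 1) \<omega>\<bar> > e'}"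
      let ?B = "{\<omega> \<in> space M. \<bar>E (real (nat \<lfloor>t\<rfloor>)) \<omega>\<bar> > e'}"
      have sub: "{\<omega> \<in> space M. \<bar>cl_state a b X0 U t \<omega>\<bar> > e} \<subseteq> ?A \<union> ?B"
      proof
        fix \<omega> assume h: "\<omega> \<in> {\<omega> \<in> space M. \<bar>cl_state a b X0 U t \<omega>\<bar> > e}"
        show "\<omega> \<in> ?A \<union> ?B"
        proof (rule ccontr)
          assume "\<omega> \<notin> ?A \<union> ?B"
          then have "\<bar>E (real (nat \<lfloor>t\<rfloor>) - 1) \<omega>\<bar> \<le> e'" "\<bar>E (real (nat \<lfloor>t\<rfloor>)) \<omega>\<bar> \<le> e'"
            using h by auto
          then have "C * \<bar>E (real (nat \<lfloor>t\<rfloor>) - 1) \<omega>\<bar> + C * \<bar>E (real (nat \<lfloor>t\<rfloor>)) \<omega>\<bar> \<le> C * e' + C * e'"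
            using Cpos by (intro add_mono mult_left_mono) auto
          also have "\<dots> = e" unfolding e'_def using Cpos by simp
          finally show False using bound[of \<omega> t] h t1 by auto
        qed
      qed
      have "measure M {\<omega> \<in> space M. \<bar>cl_state a b X0 U t \<omega>\<bar> > e} \<le> measure M (?A \<union> ?B)"
        by (rule P.finite_measure_mono[OF sub]) measurable
      also have "\<dots> \<le> measure M ?A + measure M ?B"
        by (rule measure_Un_le) measurable
      finally show "measure M {\<omega> \<in> space M. \<bar>cl_state a b X0 U t \<omega>\<bar> > e}
        \<le> f (real (nat \<lfloor>t\<rfloor>) - 1) + f (real (nat \<lfloor>t\<rfloor>))" unfolding f_def .
    qed
    have ev1: "\<forall>\<^sub>F t in at_top. 0 \<le> measure M {\<omega> \<in> space M. \<bar>cl_state a b X0 U t \<omega>\<bar> > e}"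
      by simp
    show ?thesis by (rule tendsto_sandwich[OF ev1 ev2 tendsto_const hl])
  qed
  show ?thesis
    apply (rule exI[of _ K], rule exI[of _ enc], rule exI[of _ "ctrl0 a b est"])
    using adm absint meas lim unfolding Let_def tendsto_zero_in_prob_def U_def D_def
    by auto
qed

end
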